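(* Let $f,g_1,\dots,g_m\in\mathrm{CN}^n$ have a common convex domain $M\subseteq\mathbb{R}^n$, let $D\subseteq M$, let $t(x)=\max_{1\le i\le m} g_i(x)$, $(s)_+=\max\{s,0\}$, and $h(x)=((t(x))_+,f(x))\in\mathbb{R}^2$. Then $h$ is conic with respect to the lexicographic order on $\mathbb{R}^2$, and if the feasible set $S=\{x\in D: g_i(x)\le 0 \text{ for all } i\}$ is nonempty, then the set of minimizers of $f$ over $S$ coincides with the set of lexicographic minimizers of $h$ over $D$.
   Context: A function $f:\mathrm{dom}(f)\to \Omega$, with $\mathrm{dom}(f)\subseteq\mathbb{R}^n$ convex and $\Omega$ totally ordered ($\mathbb{R}$, or $\mathbb{R}^2$ with lexicographic order), is conic if for all $y,z\in\mathrm{dom}(f)$ and $t\ge 0$ with $f(y)\le f(z)$ and $z+t(z-y)\in\mathrm{dom}(f)$, one has $f(z+t(z-y))\ge f(z)$. $\mathrm{CN}^n$ is the class of real-valued conic functions on convex subsets of $\mathbb{R}^n$. *)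

theory Defs
  imports "HOL-Analysis.Analysis"
begin

definition conic_wrt :: "('b \<Rightarrow> 'b \<Rightarrow> bool) \<Rightarrow> ('a::real_vector) set \<Rightarrow> ('a \<Rightarrow> 'b) \<Rightarrow> bool" where
  "conic_wrt le M f \<longleftrightarrow> convex M \<and>
     (\<forall>y\<in>M. \<forall>z\<in>M. \<forall>t::real. t \<ge> 0 \<and> le (f y) (f z) \<and> z + t *\<^sub>R (z - y) \<in> M
        \<longrightarrow> le (f z) (f (z + t *\<^sub>R (z - y))))"

definition CN :: "('a::real_vector) set \<Rightarrow> ('a \<Rightarrow> real) \<Rightarrow> bool" where
  "CN M f \<longleftrightarrow> conic_wrt (\<le>) M f"

definition lex_le :: "real \<times> real \<Rightarrow> real \<times> real \<Rightarrow> bool" where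
  "lex_le p q \<longleftrightarrow> fst p < fst q \<or> (fst p = fst q \<and> snd p \<le> snd q)"

end

theory Submission
  imports Defs
begin

lemma CN_strict:
  fixes g :: "'a::real_vector \<Rightarrow> real"
  assumes "CN M g" "y \<in> M" "z \<in> M" "t > 0" "g y < g z" "z + t *\<^sub>R (z - y) \<in> M"
  shows "g z < g (z + t *\<^sub>R (z - y))"
proof (rule ccontr)
  define w where "w = z + t *\<^sub>R (z - y)"
  assume "\<not> ?thesis"
  hence le: "g w \<le> g z" unfolding w_def by simp
  have "z - w = - (t *\<^sub>R (z - y))" unfolding w_def by simp
  hence "(1/t) *\<^sub>R (z - w) = - (z - y)" using assms(4) by simp
  hence eq: "z + (1/t) *\<^sub>R (z - w) = y" by simp
  have C: "\<forall>y\<in>M. \<forall>z\<in>M. \<forall>t::real. t \<ge> 0 \<and> g y \<le> g z \<and> z + t *\<^sub>R (z - y) \<in> M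
        \<longrightarrow> g z \<le> g (z + t *\<^sub>R (z - y))" using assms(1) unfolding CN_def conic_wrt_def by blast
  have w: "w \<in> M" using assms(6) unfolding w_def .
  have "0 \<le> 1/t" using assms(4) by simp
  hence "g z \<le> g (z + (1/t) *\<^sub>R (z - w))" using C w assms(3) le eq assms(2) by metis
  with eq assms(5) show False by simp
qed


lemma CN_weak:
  assumes "CN M g" "y \<in> M" "z \<in> M" "t \<ge> 0" "g y \<le> g z" "z + t *\<^sub>R (z - y) \<in> M"
  shows "g z \<le> g (z + t *\<^sub>R (z - y))"
  using assms unfolding CN_def conic_wrt_def by blast

theorem mainTheorem4:
  fixes M D :: "(real ^ 'n) set" and f :: "real ^ 'n \<Rightarrow> real"
    and g :: "nat \<Rightarrow> real ^ 'n \<Rightarrow> real" and m :: nat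
  assumes "m \<ge> 1"
    and "CN M f"
    and "\<forall>i\<in>{1..m}. CN M (g i)"
    and "D \<subseteq> M"
  defines "h \<equiv> (\<lambda>x. (max (Max ((\<lambda>i. g i x) ` {1..m})) 0, f x))"
    and "S \<equiv> {x\<in>D. \<forall>i\<in>{1..m}. g i x \<le> 0}"
  shows "conic_wrt lex_le M h \<and>
    (S \<noteq> {} \<longrightarrow>
      {x\<in>S. \<forall>y\<in>S. f x \<le> f y} = {x\<in>D. \<forall>y\<in>D. lex_le (h x) (h y)})"
proof -
  define T where "T x = Max ((\<lambda>i. g i x) ` {1..m})" for x
  have ne: "{1..m} \<noteq> {}" using assms(1) by auto
  have Tge: "g i x \<le> T x" if "i \<in> {1..m}" for i x
    unfolding T_def using that by (intro Max_ge) auto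
  have Tex: "\<exists>j\<in>{1..m}. T x = g j x" for x
  proof -
    have "T x \<in> (\<lambda>i. g i x) ` {1..m}" unfolding T_def using ne by (intro Max_in) auto
    thus ?thesis by auto
  qed
  have Tle: "T x \<le> 0 \<longleftrightarrow> (\<forall>i\<in>{1..m}. g i x \<le> 0)" for x
  proof
    assume "T x \<le> 0" thus "\<forall>i\<in>{1..m}. g i x \<le> 0" using Tge by (meson order_trans)
  next
    assume "\<forall>i\<in>{1..m}. g i x \<le> 0" thus "T x \<le> 0" using Tex[of x] by force
  qed
  have hT: "h x = (max (T x) 0, f x)" for x unfolding h_def T_def by simp
  have cvx: "convex M" using assms(2) unfolding CN_def conic_wrt_def by blast
  have part1: "conic_wrt lex_le M h"
    unfolding conic_wrt_def
  proof (intro conjI cvx ballI allI impI)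
    fix y z and t :: real
    assume y: "y \<in> M" and z: "z \<in> M" and H: "0 \<le> t \<and> lex_le (h y) (h z) \<and> z + t *\<^sub>R (z - y) \<in> M"
    let ?w = "z + t *\<^sub>R (z - y)"
    have t: "t \<ge> 0" and hl: "lex_le (h y) (h z)" and w: "?w \<in> M" using H by auto
    show "lex_le (h z) (h ?w)"
    proof (cases "t = 0")
      case True thus ?thesis unfolding lex_le_def by simp
    next
      case False
      hence tp: "t > 0" using t by simp
      from hl consider (lt) "max (T y) 0 < max (T z) 0"
        | (eq) "max (T y) 0 = max (T z) 0" "f y \<le> f z"
        unfolding lex_le_def hT by auto
      thus ?thesis
      proof cases
        case lt
        obtain j where j: "j \<in> {1..m}" "T z = g j z" using Tex by blast
        have "g j y < g j z" using lt Tge[OF j(1), of y] j(2) by linarith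
        hence "g j z < g j ?w" using CN_strict[of M "g j" y z t] assms(3) j y z tp w by blast
        hence "max (T z) 0 < max (T ?w) 0" using Tge[OF j(1), of ?w] j(2) lt by linarith
        thus ?thesis unfolding lex_le_def hT by simp
      next
        case eq
        have f: "f z \<le> f ?w" using CN_weak[OF assms(2) y z t eq(2) w] .
        have "max (T z) 0 \<le> max (T ?w) 0"
        proof (cases "T z \<le> 0")
          case True thus ?thesis by simp
        next
          case False
          obtain j where j: "j \<in> {1..m}" "T z = g j z" using Tex by blast
          have "g j y \<le> g j z" using eq(1) False Tge[OF j(1), of y] j(2) by linarith
          hence "g j z \<le> g j ?w" using CN_weak[of M "g j" y z t] assms(3) j y z t w by blast
          thus ?thesis using Tge[OF j(1), of ?w] j(2) by linarith
        qed
        thus ?thesis using f unfolding lex_le_def hT by auto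
      qed
    qed
  qed
  have part2: "{x\<in>S. \<forall>y\<in>S. f x \<le> f y} = {x\<in>D. \<forall>y\<in>D. lex_le (h x) (h y)}" if Sne: "S \<noteq> {}"
  proof -
    obtain s where s: "s \<in> S" using Sne by blast
    have S': "S = {x\<in>D. T x \<le> 0}" unfolding S_def using Tle by auto
    show ?thesis
    proof (intro equalityI subsetI)
      fix x assume "x \<in> {x\<in>S. \<forall>y\<in>S. f x \<le> f y}"
      hence x: "x \<in> D" "T x \<le> 0" "\<forall>y\<in>S. f x \<le> f y" using S' by auto
      show "x \<in> {x\<in>D. \<forall>y\<in>D. lex_le (h x) (h y)}"
      proof (intro CollectI conjI x(1) ballI)
        fix y assume y: "y \<in> D"
        show "lex_le (h x) (h y)"
        proof (cases "T y \<le> 0")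
          case True thus ?thesis using x y S' unfolding lex_le_def hT by auto
        next
          case False thus ?thesis using x unfolding lex_le_def hT by auto
        qed
      qed
    next
      fix x assume "x \<in> {x\<in>D. \<forall>y\<in>D. lex_le (h x) (h y)}"
      hence x: "x \<in> D" "\<forall>y\<in>D. lex_le (h x) (h y)" by auto
      have sD: "s \<in> D" "T s \<le> 0" using s S' by auto
      have "lex_le (h x) (h s)" using x sD by auto
      hence Tx: "T x \<le> 0" using sD unfolding lex_le_def hT by simp linarith
      show "x \<in> {x\<in>S. \<forall>y\<in>S. f x \<le> f y}"
      proof (intro CollectI conjI ballI)
        show "x \<in> S" using S' x Tx by auto
        fix y assume "y \<in> S"
        hence "y \<in> D" "T y \<le> 0" using S' by auto
        thus "f x \<le> f y" using x(2) Tx unfolding lex_le_def hT by auto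
      qed
    qed
  qed
  show ?thesis using part1 part2 by blast
qed

end
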